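(* Let $h:[0,\infty)\to[\frac{\beta u_0-1}{r},\frac{\beta u_0}{r}]$ be a decreasing solution to the HJB equation with $h'(0)=0$, and let $z_f\in(0,d]$, $z_g\in[d,\infty)$ be such that $h=\bar f$ on $[0,z_f]$ for some function $\bar f(z)=\frac{\beta u_0}{r}+A_2e^{\theta_1(u_0)z}+B_2e^{-\theta_2(u_0)z}$ and $h=\bar g$ on $(z_g,\infty)$ for some function $\bar g(z)=\frac{\beta u_0-1}{r}+a_2e^{\theta_1(u_0)z}+b_2e^{-\theta_2(u_0)z}$ (as provided by the structure result for such solutions). Then $$\bar f(z)=\frac{\beta u_0}{r}+A_2\Big(e^{\theta_1(u_0)z}+\frac{\theta_1(u_0)}{\theta_2(u_0)}e^{-\theta_2(u_0)z}\Big)\ (z\in[0,z_f]),\qquad \bar g(z)=\frac{\beta u_0-1}{r}+b_2e^{-\theta_2(u_0)z}\ (z>z_g).$$ In particular $\lim_{z\to\infty}h(z)=\frac{\beta u_0-1}{r}$.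
   Context: Fix $\mu\in\mathbb R$, $\sigma>0$, $u_0>0$, $r>0$, $\beta>0$, $d>0$. For $u\in[0,u_0]$ let $\theta_1(u)=\frac{\sqrt{(\mu-u)^2+2r\sigma^2}+(\mu-u)}{\sigma^2}$ and $\theta_2(u)=\frac{\sqrt{(\mu-u)^2+2r\sigma^2}-(\mu-u)}{\sigma^2}$. The HJB equation is $$-rh(z)-\mu h'(z)+\tfrac{\sigma^2}{2}h''(z)+\sup_{u\in[0,u_0]}\{(\beta+h'(z))u\}=\mathbf 1_{\{z>d\}}.$$ A solution to the HJB equation is a function $h:[0,\infty)\to[\frac{\beta u_0-1}{r},\frac{\beta u_0}{r}]$ that is continuously differentiable on $[0,\infty)$, twice continuously differentiable on $[0,d]$ and on $(d,\infty)$ respectively (with $h'(0),h''(0)$ the right derivatives and $h''(d)$ the left second derivative), and satisfies the HJB equation for all $z\ge0$. *)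

theory Defs
  imports "HOL-Analysis.Analysis"
begin

definition theta1 :: "real \<Rightarrow> real \<Rightarrow> real \<Rightarrow> real \<Rightarrow> real" where
  "theta1 \<mu> \<sigma> r u = (sqrt ((\<mu> - u)\<^sup>2 + 2 * r * \<sigma>\<^sup>2) + (\<mu> - u)) / \<sigma>\<^sup>2"

definition theta2 :: "real \<Rightarrow> real \<Rightarrow> real \<Rightarrow> real \<Rightarrow> real" where
  "theta2 \<mu> \<sigma> r u = (sqrt ((\<mu> - u)\<^sup>2 + 2 * r * \<sigma>\<^sup>2) - (\<mu> - u)) / \<sigma>\<^sup>2"

text \<open>h is a solution of the HJB equation, with h1 = h' (right derivative at 0)
  and h2 = h'' (right derivative at 0, left second derivative at d).\<close>
definition HJB_solution ::
  "real \<Rightarrow> real \<Rightarrow> real \<Rightarrow> real \<Rightarrow> real \<Rightarrow> real \<Rightarrow>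
   (real \<Rightarrow> real) \<Rightarrow> (real \<Rightarrow> real) \<Rightarrow> (real \<Rightarrow> real) \<Rightarrow> bool" where
  "HJB_solution \<mu> \<sigma> u0 r \<beta> d h h1 h2 \<longleftrightarrow>
     (\<forall>z\<ge>0. (\<beta> * u0 - 1) / r \<le> h z \<and> h z \<le> \<beta> * u0 / r) \<and>
     (\<forall>z\<ge>0. (h has_real_derivative h1 z) (at z within {0..})) \<and>
     continuous_on {0..} h1 \<and>
     (\<forall>z\<in>{0..d}. (h1 has_real_derivative h2 z) (at z within {0..d})) \<and>
     continuous_on {0..d} h2 \<and>
     (\<forall>z>d. (h1 has_real_derivative h2 z) (at z)) \<and>
     continuous_on {d<..} h2 \<and>
     (\<forall>z\<ge>0. - r * h z - \<mu> * h1 z + \<sigma>\<^sup>2 / 2 * h2 z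
               + (SUP u\<in>{0..u0}. (\<beta> + h1 z) * u)
             = (if z > d then 1 else 0))"

end

theory Submission
  imports Defs "HOL-Real_Asymp.Real_Asymp"
begin

theorem lemma2p4:
  fixes \<mu> \<sigma> u0 r \<beta> d zf zg A2 B2 a2 b2 :: real
    and h h1 h2 :: "real \<Rightarrow> real"
  assumes "\<sigma> > 0" "u0 > 0" "r > 0" "\<beta> > 0" "d > 0"
    and sol: "HJB_solution \<mu> \<sigma> u0 r \<beta> d h h1 h2"
    and decr: "\<forall>x y. 0 \<le> x \<longrightarrow> x \<le> y \<longrightarrow> h y \<le> h x"
    and h1_0: "h1 0 = 0"
    and zf: "0 < zf" "zf \<le> d"
    and zg: "d \<le> zg"
    and hf: "\<forall>z\<in>{0..zf}. h z = \<beta> * u0 / r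
              + A2 * exp (theta1 \<mu> \<sigma> r u0 * z) + B2 * exp (- theta2 \<mu> \<sigma> r u0 * z)"
    and hg: "\<forall>z>zg. h z = (\<beta> * u0 - 1) / r
              + a2 * exp (theta1 \<mu> \<sigma> r u0 * z) + b2 * exp (- theta2 \<mu> \<sigma> r u0 * z)"
  shows "(\<forall>z\<in>{0..zf}. \<beta> * u0 / r
              + A2 * exp (theta1 \<mu> \<sigma> r u0 * z) + B2 * exp (- theta2 \<mu> \<sigma> r u0 * z)
            = \<beta> * u0 / r + A2 * (exp (theta1 \<mu> \<sigma> r u0 * z)
                 + theta1 \<mu> \<sigma> r u0 / theta2 \<mu> \<sigma> r u0 * exp (- theta2 \<mu> \<sigma> r u0 * z)))
       \<and> (\<forall>z>zg. (\<beta> * u0 - 1) / r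
              + a2 * exp (theta1 \<mu> \<sigma> r u0 * z) + b2 * exp (- theta2 \<mu> \<sigma> r u0 * z)
            = (\<beta> * u0 - 1) / r + b2 * exp (- theta2 \<mu> \<sigma> r u0 * z))
       \<and> (h \<longlongrightarrow> (\<beta> * u0 - 1) / r) at_top"
proof -
  define t1 where "t1 = theta1 \<mu> \<sigma> r u0"
  define t2 where "t2 = theta2 \<mu> \<sigma> r u0"
  define S where "S = sqrt ((\<mu> - u0)\<^sup>2 + 2 * r * \<sigma>\<^sup>2)"
  have "sqrt ((\<mu> - u0)\<^sup>2) < S" unfolding S_def
    using assms(1,3) by (intro real_sqrt_less_mono) simp
  hence Sgt: "\<bar>\<mu> - u0\<bar> < S" by simp
  have t1pos: "t1 > 0" unfolding t1_def theta1_def S_def[symmetric] using Sgt assms(1) by simp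
  have t2pos: "t2 > 0" unfolding t2_def theta2_def S_def[symmetric] using Sgt assms(1) by simp
  from sol have bnd: "\<forall>z\<ge>0. (\<beta> * u0 - 1) / r \<le> h z \<and> h z \<le> \<beta> * u0 / r"
    and der: "\<forall>z\<ge>0. (h has_real_derivative h1 z) (at z within {0..})"
    unfolding HJB_solution_def by blast+
  define f where "f = (\<lambda>z. \<beta> * u0 / r + A2 * exp (t1 * z) + B2 * exp (- t2 * z))"
  have fd: "(f has_real_derivative (A2 * t1 - B2 * t2)) (at 0 within {0..zf})"
    unfolding f_def by (auto intro!: derivative_eq_intros)
  have hd: "(h has_real_derivative h1 0) (at 0 within {0..zf})"
    using der by (auto intro: has_field_derivative_subset)
  have hd2: "(f has_real_derivative h1 0) (at 0 within {0..zf})"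
    apply (rule has_field_derivative_transform_within[OF hd zero_less_one])
    using zf hf unfolding f_def t1_def t2_def by auto
  have "at (0::real) within {0..zf} \<noteq> bot"
    using at_within_Icc_at_right[OF zf(1)] by simp
  hence "A2 * t1 - B2 * t2 = 0" using has_field_derivative_unique[OF fd hd2] h1_0 by simp
  hence B2: "B2 = A2 * t1 / t2" using t2pos by (simp add: field_simps)
  have P1: "\<forall>z\<in>{0..zf}. \<beta> * u0 / r + A2 * exp (t1 * z) + B2 * exp (- t2 * z)
        = \<beta> * u0 / r + A2 * (exp (t1 * z) + t1 / t2 * exp (- t2 * z))"
    using B2 by (simp add: algebra_simps)
  have a2: "a2 = 0"
  proof (rule ccontr)
    assume na: "a2 \<noteq> 0"
    define M where "M = 1 / r + \<bar>b2\<bar>"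
    define z where "z = max zg 0 + 1 + M / (\<bar>a2\<bar> * t1)"
    have Mpos: "M \<ge> 0" unfolding M_def using assms(3) by simp
    have "M / (\<bar>a2\<bar> * t1) \<ge> 0" using Mpos na t1pos by simp
    hence zz: "z > zg" "z \<ge> 0" "z > M / (\<bar>a2\<bar> * t1)" unfolding z_def by auto
    have "\<bar>a2\<bar> * t1 * z > M" using zz(3) na t1pos by (simp add: field_simps)
    moreover have "exp (t1 * z) \<ge> t1 * z" using exp_ge_add_one_self[of "t1*z"] by linarith
    hence "\<bar>a2\<bar> * exp (t1 * z) \<ge> \<bar>a2\<bar> * (t1 * z)" by (simp add: mult_left_mono)
    ultimately have big: "\<bar>a2 * exp (t1 * z)\<bar> > M" by (simp add: abs_mult)
    have e2: "exp (- t2 * z) \<le> 1" using t2pos zz(2) by simp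
    have "\<bar>b2 * exp (- t2 * z)\<bar> \<le> \<bar>b2\<bar>" using e2 by (simp add: abs_mult mult_left_le)
    moreover have "h z = (\<beta> * u0 - 1) / r + a2 * exp (t1 * z) + b2 * exp (- t2 * z)"
      using hg zz(1) unfolding t1_def t2_def by auto
    moreover have "(\<beta> * u0 - 1) / r \<le> h z \<and> h z \<le> \<beta> * u0 / r" using bnd zz(2) by auto
    moreover have "\<beta> * u0 / r = (\<beta> * u0 - 1) / r + 1 / r" by (simp add: diff_divide_distrib)
    ultimately show False using big unfolding M_def by linarith
  qed
  have lim0: "((\<lambda>z. exp (- t2 * z)) \<longlongrightarrow> 0) at_top" using t2pos by real_asymp
  have "((\<lambda>z. (\<beta> * u0 - 1) / r + b2 * exp (- t2 * z)) \<longlongrightarrow> (\<beta> * u0 - 1) / r + b2 * 0) at_top"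
    by (intro tendsto_intros lim0)
  hence L0: "((\<lambda>z. (\<beta> * u0 - 1) / r + b2 * exp (- t2 * z)) \<longlongrightarrow> (\<beta> * u0 - 1) / r) at_top"
    by simp
  have ev: "eventually (\<lambda>z. (\<beta> * u0 - 1) / r + b2 * exp (- t2 * z) = h z) at_top"
    using eventually_gt_at_top[of zg] by eventually_elim (use hg a2 in \<open>simp add: t1_def t2_def\<close>)
  have L: "(h \<longlongrightarrow> (\<beta> * u0 - 1) / r) at_top" using tendsto_cong[OF ev] L0 by simp
  show ?thesis using P1 a2 L unfolding t1_def t2_def by simp
qed

end
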